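(* For any $\tilde c>0$ and $N\in\mathbb N$, there exists $\eta\ge0$ such that $$\mathbb{E}\Big[\exp\Big(\tilde c\int_0^T\big(\|\mathbb{O}^{N,\eta}_t\|_{L^\infty}^2+1\big)\,dt\Big)\Big]<\infty,$$ where $\mathbb{O}^{N,\eta}_t:=\int_0^t e^{-(t-s)(A_N+\eta)}P_N\,dB^H(s)=\sum_{k=1}^N\Big(\int_0^te^{-(\lambda_k+\eta)(t-s)}dw_k^H(s)\Big)\phi_k$.
   Context: Let $\mathcal D=(0,1)$, $U=L^2(\mathcal D)$, and $\|\cdot\|_{L^\infty}$ the $L^\infty(\mathcal D)$ norm. Let $A=-\partial_x^2$ on $\mathcal D$ with homogeneous Dirichlet boundary conditions, with eigenfunctions $\phi_k(x)=\sqrt2\sin(k\pi x)$ and eigenvalues $\lambda_k=k^2\pi^2$. $P_N$ is the orthogonal projection onto $\mathrm{span}\{\phi_1,\dots,\phi_N\}$ and $A_N=P_NA$. Fix $T>0$ and $H\in(\frac12,1)$. On a filtered probability space, $\{w_k^H\}_{k}$ are independent real standard fractional Brownian motions with Hurst parameter $H$, $B^H=\sum_kw_k^H\phi_k$ is the cylindrical fBm, and $\int g\,dB^H:=\sum_k\int g\phi_k\,dw_k^H$. *)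

theory Defs
  imports "HOL-Probability.Probability"
begin

text \<open>Dirichlet eigenpairs of A = -d^2/dx^2 on (0,1).\<close>
definition phi :: "nat \<Rightarrow> real \<Rightarrow> real" where
  "phi k x = sqrt 2 * sin (real k * pi * x)"

definition lam :: "nat \<Rightarrow> real" where
  "lam k = (real k)\<^sup>2 * pi\<^sup>2"

definition fbm_cov :: "real \<Rightarrow> real \<Rightarrow> real \<Rightarrow> real" where
  "fbm_cov H s t = (s powr (2*H) + t powr (2*H) - \<bar>t - s\<bar> powr (2*H)) / 2"

definition centered_gaussian_rv :: "'a measure \<Rightarrow> real \<Rightarrow> ('a \<Rightarrow> real) \<Rightarrow> bool" where
  "centered_gaussian_rv M v Y \<longleftrightarrow> Y \<in> borel_measurable M \<and>
     (if v = 0 then (AE \<omega> in M. Y \<omega> = 0)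
      else distributed M lborel Y (normal_density 0 (sqrt v)))"

definition is_fbm :: "'a measure \<Rightarrow> real \<Rightarrow> (real \<Rightarrow> 'a \<Rightarrow> real) \<Rightarrow> bool" where
  "is_fbm M H X \<longleftrightarrow>
     (\<forall>\<omega>\<in>space M. X 0 \<omega> = 0 \<and> continuous_on {0..} (\<lambda>t. X t \<omega>)) \<and>
     (\<forall>n (ts::nat \<Rightarrow> real) (cs::nat \<Rightarrow> real). (\<forall>i<n. 0 \<le> ts i) \<longrightarrow>
        centered_gaussian_rv M (\<Sum>i<n. \<Sum>j<n. cs i * cs j * fbm_cov H (ts i) (ts j))
          (\<lambda>\<omega>. \<Sum>i<n. cs i * X (ts i) \<omega>))"

definition stoch_int :: "(real \<Rightarrow> real) \<Rightarrow> (real \<Rightarrow> 'a \<Rightarrow> real) \<Rightarrow> real \<Rightarrow> 'a \<Rightarrow> real" where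
  "stoch_int g X t \<omega> = lim (\<lambda>n. \<Sum>j<n. g (t * real j / real n) *
       (X (t * real (Suc j) / real n) \<omega> - X (t * real j / real n) \<omega>))"

definition OU :: "(nat \<Rightarrow> real \<Rightarrow> 'a \<Rightarrow> real) \<Rightarrow> nat \<Rightarrow> real \<Rightarrow> real \<Rightarrow> 'a \<Rightarrow> real \<Rightarrow> real" where
  "OU w N \<eta> t \<omega> x = (\<Sum>k=1..N. stoch_int (\<lambda>s. exp (- (lam k + \<eta>) * (t - s))) (w k) t \<omega> * phi k x)"

text \<open>Sup norm on D = (0,1) (equal to the L^\<infinity> norm for continuous functions).\<close>
definition Linf_norm :: "(real \<Rightarrow> real) \<Rightarrow> real" where
  "Linf_norm f = (SUP x\<in>{0<..<1}. \<bar>f x\<bar>)"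

end

theory Submission
  imports Defs
begin


lemma powr_convex0:
  assumes "p \<ge> 1" shows "convex_on {0..} (\<lambda>x::real. x powr p)"
proof (rule convex_on_linorderI)
  fix t x y :: real assume t: "0 < t" "t < 1" and xy: "x \<in> {0..}" "y \<in> {0..}" "x < y"
  show "((1 - t) *\<^sub>R x + t *\<^sub>R y) powr p \<le> (1 - t) * x powr p + t * y powr p"
  proof (cases "x = 0")
    case True
    have "(t * y) powr p = t powr p * y powr p" using t xy by (simp add: powr_mult)
    also have "\<dots> \<le> t * y powr p"
    proof (rule mult_right_mono)
      have "t powr p \<le> t powr 1" using t assms by (intro powr_mono') auto
      then show "t powr p \<le> t" using t by simp
    qed simp
    finally show ?thesis using True by simp
  next
    case False
    then have "x \<in> {0<..}" "y \<in> {0<..}" using xy by auto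
    from convex_onD[OF powr_convex[OF assms], of t x y] this t show ?thesis by auto
  qed
qed (simp add: convex_real_interval)

lemma convex_incr:
  fixes f :: "real \<Rightarrow> real"
  assumes cf: "convex_on {0..} f" and u: "0 \<le> u" and y: "0 \<le> y" and z: "0 \<le> z"
  shows "f (u + z) + f (u + y) \<le> f (u + y + z) + f u"
proof (cases "y + z = 0")
  case True
  then have "y = 0" "z = 0" using y z by auto
  then show ?thesis by simp
next
  case False
  define a where "a = z / (y + z)"
  have a: "0 \<le> a" "a \<le> 1" using y z False by (auto simp: a_def)
  have "a * (y + z) = z" unfolding a_def using False by simp
  then have ay: "a * y + a * z = z" by (simp add: distrib_left)
  have e1: "(1 - a) *\<^sub>R u + a *\<^sub>R (u + y + z) = u + z"
    using ay by (simp add: algebra_simps)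
  have e2: "a *\<^sub>R u + (1 - a) *\<^sub>R (u + y + z) = u + y"
    using ay by (simp add: algebra_simps)
  have "f (u + z) \<le> (1 - a) * f u + a * f (u + y + z)"
    using convex_onD[OF cf, of a u "u+y+z"] a u y z e1 by auto
  moreover have "f (u + y) \<le> (1 - (1 - a)) * f u + (1 - a) * f (u + y + z)"
    using convex_onD[OF cf, of "1 - a" u "u+y+z"] a u y z e2 by auto
  ultimately show ?thesis by (simp add: algebra_simps)
qed

lemma fbm_cov_sym: "fbm_cov H s t = fbm_cov H t s"
  unfolding fbm_cov_def by (simp add: abs_minus_commute)

lemma fbm_cov_zero: "0 \<le> s \<Longrightarrow> fbm_cov H s 0 = 0"
  unfolding fbm_cov_def by simp

lemma fbm_incr_nonneg:
  assumes H: "1/2 \<le> H" and "0 \<le> a" "a \<le> b" "b \<le> c" "c \<le> d"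
  shows "0 \<le> fbm_cov H b d - fbm_cov H b c - fbm_cov H a d + fbm_cov H a c"
proof -
  let ?f = "\<lambda>x::real. x powr (2*H)"
  have cf: "convex_on {0..} ?f" using H by (intro powr_convex0) auto
  have "?f ((c-b) + (d-c)) + ?f ((c-b) + (b-a)) \<le> ?f ((c-b) + (b-a) + (d-c)) + ?f (c-b)"
    using convex_incr[OF cf, of "c-b" "b-a" "d-c"] assms by auto
  moreover have "(c-b) + (d-c) = d - b" "(c-b) + (b-a) = c - a" "(c-b) + (b-a) + (d-c) = d - a" by auto
  ultimately have "?f (d-b) + ?f (c-a) \<le> ?f (d-a) + ?f (c-b)" by simp
  then show ?thesis using assms unfolding fbm_cov_def by (simp add: field_simps)
qed

lemma fbm_diag_nonneg:
  assumes "0 \<le> a" "a \<le> b"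
  shows "0 \<le> fbm_cov H b b - fbm_cov H b a - fbm_cov H a b + fbm_cov H a a"
  using assms unfolding fbm_cov_def by (simp add: field_simps)

definition Cm :: "real \<Rightarrow> (nat \<Rightarrow> real) \<Rightarrow> nat \<Rightarrow> nat \<Rightarrow> real" where
  "Cm H s i j = fbm_cov H (s (Suc i)) (s (Suc j)) - fbm_cov H (s (Suc i)) (s j)
      - fbm_cov H (s i) (s (Suc j)) + fbm_cov H (s i) (s j)"

lemma Cm_sym: "Cm H s i j = Cm H s j i"
  unfolding Cm_def by (simp add: fbm_cov_sym)

lemma Cm_nonneg:
  assumes H: "1/2 \<le> H" and s0: "0 \<le> s 0" and ms: "mono s"
  shows "0 \<le> Cm H s i j"
proof -
  have sn: "\<And>i. 0 \<le> s i" using s0 ms by (meson order_trans le0 monoD)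
  have lt: "0 \<le> Cm H s i j" if "i < j" for i j
  proof -
    have "s i \<le> s (Suc i)" "s (Suc i) \<le> s j" "s j \<le> s (Suc j)" using ms that by (auto intro: monoD)
    then show ?thesis unfolding Cm_def using fbm_incr_nonneg[OF H sn[of i]] by auto
  qed
  consider "i < j" | "i = j" | "j < i" by linarith
  then show ?thesis
  proof cases
    case 1 then show ?thesis using lt by auto
  next
    case 2
    have "s i \<le> s (Suc i)" using ms by (simp add: monoD)
    then show ?thesis unfolding Cm_def using fbm_diag_nonneg[OF sn[of i], of "s (Suc i)"] 2
      by auto
  next
    case 3 then show ?thesis using lt[OF 3] Cm_sym by metis
  qed
qed



lemma powr_diff_le:
  fixes a b T p :: real
  assumes "0 \<le> a" "a \<le> b" "b \<le> T" "1 \<le> p"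
  shows "b powr p - a powr p \<le> p * T powr (p - 1) * (b - a)"
proof (cases "a = b")
  case True then show ?thesis by simp
next
  case False
  then have ab: "a < b" using assms by simp
  have cont: "continuous_on {a..b} (\<lambda>x. x powr p)"
    using assms by (intro continuous_on_powr' continuous_intros) auto
  have dif: "(\<lambda>x. x powr p) differentiable (at x)" if "a < x" for x
    using has_real_derivative_powr[of x p] that assms by (auto simp: real_differentiable_def)
  obtain l z where z: "a < z" "z < b" "DERIV (\<lambda>x. x powr p) z :> l"
    "b powr p - a powr p = (b - a) * l"
    using MVT[OF ab cont] dif by blast
  have "l = p * z powr (p - 1)"
    using DERIV_unique[OF z(3) has_real_derivative_powr[of z p]] z assms by auto
  moreover have "z powr (p - 1) \<le> T powr (p - 1)"
    using z assms by (intro powr_mono2) auto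
  ultimately have "l \<le> p * T powr (p - 1)" using assms by (auto intro: mult_left_mono)
  then show ?thesis using z(4) ab by (simp add: mult.commute mult_left_mono)
qed

lemma double_sum_sym_bound:
  fixes g :: "nat \<Rightarrow> real" and C :: "nat \<Rightarrow> nat \<Rightarrow> real"
  assumes Cn: "\<And>i j. 0 \<le> C i j" and Cs: "\<And>i j. C i j = C j i"
  shows "(\<Sum>i<n. \<Sum>j<n. g i * g j * C i j) \<le> (\<Sum>i<n. (g i)\<^sup>2 * (\<Sum>j<n. C i j))"
proof -
  have "(\<Sum>i<n. \<Sum>j<n. g i * g j * C i j) \<le> (\<Sum>i<n. \<Sum>j<n. ((g i)\<^sup>2 + (g j)\<^sup>2) / 2 * C i j)"
  proof (intro sum_mono mult_right_mono Cn)
    fix i j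
    have "0 \<le> (g i - g j)\<^sup>2" by simp
    then show "g i * g j \<le> ((g i)\<^sup>2 + (g j)\<^sup>2) / 2" by (simp add: power2_eq_square algebra_simps)
  qed
  also have "\<dots> = (\<Sum>i<n. \<Sum>j<n. (g i)\<^sup>2 * C i j) / 2 + (\<Sum>i<n. \<Sum>j<n. (g j)\<^sup>2 * C i j) / 2"
    by (simp add: sum.distrib sum_divide_distrib add_divide_distrib distrib_right)
  also have "(\<Sum>i<n. \<Sum>j<n. (g j)\<^sup>2 * C i j) = (\<Sum>i<n. \<Sum>j<n. (g i)\<^sup>2 * C i j)"
    by (subst sum.swap) (simp add: Cs)
  also have "(\<Sum>i<n. \<Sum>j<n. (g i)\<^sup>2 * C i j) / 2 + (\<Sum>i<n. \<Sum>j<n. (g i)\<^sup>2 * C i j) / 2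
       = (\<Sum>i<n. (g i)\<^sup>2 * (\<Sum>j<n. C i j))" by (simp add: sum_distrib_left)
  finally show ?thesis .
qed

lemma Cm_row_sum:
  assumes "\<And>i. 0 \<le> s i"
  shows "(\<Sum>j<n. Cm H s i j) = (fbm_cov H (s (Suc i)) (s n) - fbm_cov H (s (Suc i)) (s 0))
           - (fbm_cov H (s i) (s n) - fbm_cov H (s i) (s 0))"
proof -
  have "(\<Sum>j<n. Cm H s i j) = (\<Sum>j<n. fbm_cov H (s (Suc i)) (s (Suc j)) - fbm_cov H (s (Suc i)) (s j))
     - (\<Sum>j<n. fbm_cov H (s i) (s (Suc j)) - fbm_cov H (s i) (s j))"
    unfolding Cm_def sum_subtractf[symmetric] by (intro sum.cong) auto
  then show ?thesis
    using sum_lessThan_telescope[of "\<lambda>j. fbm_cov H (s (Suc i)) (s j)" n]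
      sum_lessThan_telescope[of "\<lambda>j. fbm_cov H (s i) (s j)" n] by simp
qed



lemma lin_helper: "\<lbrakk>(P::real) = (a + b - c)/2; b - a \<le> A; 0 \<le> c; 0 \<le> A\<rbrakk> \<Longrightarrow> b - P \<le> A + c"
  by (simp add: field_simps)

lemma Phi_mono:
  assumes "1/2 < H" "0 \<le> x" "x \<le> y" "y \<le> t"
  shows "fbm_cov H x t \<le> fbm_cov H y t"
proof -
  have "x powr (2*H) \<le> y powr (2*H)" using assms by (intro powr_mono2) auto
  moreover have "\<bar>t - y\<bar> powr (2*H) \<le> \<bar>t - x\<bar> powr (2*H)" using assms by (intro powr_mono2) auto
  ultimately show ?thesis unfolding fbm_cov_def by (simp add: divide_right_mono)
qed

lemma var_bound:
  fixes t T H \<mu> \<eta> \<delta> :: real and n :: nat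
  assumes H: "1/2 < H" "H < 1" and t: "0 \<le> t" "t \<le> T" and n: "0 < n"
    and mu: "\<eta> \<le> \<mu>" "0 \<le> \<eta>" and d: "0 < \<delta>"
  defines "s \<equiv> \<lambda>i. t * real i / real n"
  defines "g \<equiv> \<lambda>i. exp (- \<mu> * (t - s i))"
  shows "(\<Sum>i<n. \<Sum>j<n. g i * g j * Cm H s i j)
     \<le> exp (-2*\<eta>*\<delta>) * T powr (2*H) + 2*H * T powr (2*H - 1) * \<delta> + \<delta> powr (2*H)"
proof -
  define \<Phi> where "\<Phi> x = fbm_cov H x t" for x
  define \<Psi> where "\<Psi> x = \<Phi> (max x (t - \<delta>))" for x
  define E where "E = exp (-2*\<eta>*\<delta>)"
  have E0: "0 \<le> E" by (simp add: E_def)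
  have s0: "s 0 = 0" and sn: "s n = t" using n by (auto simp: s_def)
  have ms: "mono s" unfolding s_def mono_def using t by (auto intro!: divide_right_mono mult_left_mono)
  have snn: "\<And>i. 0 \<le> s i" using t by (auto simp: s_def)
  have sle: "\<And>i. i \<le> n \<Longrightarrow> s i \<le> t"
  proof -
    fix i assume "i \<le> n"
    then have "real i / real n \<le> 1" using n by auto
    then have "t * (real i / real n) \<le> t * 1" using t by (intro mult_left_mono) auto
    then show "s i \<le> t" by (simp add: s_def)
  qed
  have Phimono: "\<And>x y. 0 \<le> x \<Longrightarrow> x \<le> y \<Longrightarrow> y \<le> t \<Longrightarrow> \<Phi> x \<le> \<Phi> y"
    unfolding \<Phi>_def using Phi_mono[OF H(1)] by blast
  have Cn: "\<And>i j. 0 \<le> Cm H s i j" using Cm_nonneg[of H s] H s0 ms by auto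
  have step1: "(\<Sum>i<n. \<Sum>j<n. g i * g j * Cm H s i j) \<le> (\<Sum>i<n. (g i)\<^sup>2 * (\<Sum>j<n. Cm H s i j))"
    by (rule double_sum_sym_bound) (use Cn Cm_sym in auto)
  have D: "(\<Sum>j<n. Cm H s i j) = \<Phi> (s (Suc i)) - \<Phi> (s i)" for i
    unfolding Cm_row_sum[of s, OF snn] \<Phi>_def sn s0 using snn by (simp add: fbm_cov_zero)
  have step2: "(g i)\<^sup>2 * (\<Phi> (s (Suc i)) - \<Phi> (s i))
      \<le> E * (\<Phi> (s (Suc i)) - \<Phi> (s i)) + (\<Psi> (s (Suc i)) - \<Psi> (s i))" if i: "i < n" for i
  proof -
    have si: "s i \<le> s (Suc i)" "s (Suc i) \<le> t" using ms sle i by (auto intro: monoD)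
    have Dn: "0 \<le> \<Phi> (s (Suc i)) - \<Phi> (s i)" using Phimono[OF snn si] by simp
    have g2: "(g i)\<^sup>2 = exp (-2 * \<mu> * (t - s i))"
      unfolding g_def by (simp add: power2_eq_square exp_add[symmetric])
    show ?thesis
    proof (cases "\<delta> \<le> t - s i")
      case True
      have "-2 * \<mu> * (t - s i) \<le> -2*\<eta>*\<delta>"
      proof -
        have "\<eta> * \<delta> \<le> \<mu> * (t - s i)" using mu d True by (intro mult_mono) auto
        then show ?thesis by simp
      qed
      then have "(g i)\<^sup>2 \<le> E" unfolding g2 E_def by simp
      then have "(g i)\<^sup>2 * (\<Phi> (s (Suc i)) - \<Phi> (s i)) \<le> E * (\<Phi> (s (Suc i)) - \<Phi> (s i))"
        using Dn by (intro mult_right_mono) auto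
      moreover have "\<Psi> (s i) \<le> \<Psi> (s (Suc i))" unfolding \<Psi>_def
        using si snn[of i] t d by (intro Phimono) auto
      ultimately show ?thesis by simp
    next
      case False
      have "(g i)\<^sup>2 \<le> 1" unfolding g2 using si mu sle[of i] i by (simp add: mult_nonneg_nonneg)
      then have "(g i)\<^sup>2 * (\<Phi> (s (Suc i)) - \<Phi> (s i)) \<le> (\<Phi> (s (Suc i)) - \<Phi> (s i))"
        using Dn by (simp add: mult_left_le_one_le)
      moreover have "\<Psi> (s i) = \<Phi> (s i)" "\<Psi> (s (Suc i)) = \<Phi> (s (Suc i))"
        unfolding \<Psi>_def using False si by auto
      moreover have "0 \<le> E * (\<Phi> (s (Suc i)) - \<Phi> (s i))" using E0 Dn by simp
      ultimately show ?thesis by simp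
    qed
  qed
  have "(\<Sum>i<n. (g i)\<^sup>2 * (\<Sum>j<n. Cm H s i j))
      \<le> (\<Sum>i<n. E * (\<Phi> (s (Suc i)) - \<Phi> (s i)) + (\<Psi> (s (Suc i)) - \<Psi> (s i)))"
    unfolding D by (intro sum_mono step2) auto
  also have "\<dots> = E * (\<Phi> t - \<Phi> 0) + (\<Psi> t - \<Psi> 0)"
    unfolding sum.distrib sum_distrib_left[symmetric]
    using sum_lessThan_telescope[of "\<lambda>i. \<Phi> (s i)" n] sum_lessThan_telescope[of "\<lambda>i. \<Psi> (s i)" n]
    by (simp add: sn s0)
  also have "\<Phi> t = t powr (2*H)" unfolding \<Phi>_def fbm_cov_def by simp
  also have "\<Phi> 0 = 0" unfolding \<Phi>_def fbm_cov_def using t by simp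
  also have "\<Psi> t = t powr (2*H)" unfolding \<Psi>_def \<Phi>_def fbm_cov_def using d by simp
  also have "E * (t powr (2 * H) - 0) \<le> E * T powr (2*H)"
    using E0 t H powr_mono2[of "2*H" t T] by (intro mult_left_mono) auto
  also have "t powr (2 * H) - \<Psi> 0 \<le> 2*H * T powr (2*H - 1) * \<delta> + \<delta> powr (2*H)"
  proof (cases "t \<le> \<delta>")
    case True
    then have "\<Psi> 0 = \<Phi> 0" unfolding \<Psi>_def by simp
    then have "\<Psi> 0 = 0" unfolding \<Phi>_def fbm_cov_def using t by simp
    moreover have "t powr (2*H) \<le> \<delta> powr (2*H)" using True t H by (intro powr_mono2) auto
    moreover have "0 \<le> 2*H * T powr (2*H - 1) * \<delta>" using H d by simp
    ultimately show ?thesis by (simp add: algebra_simps)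
  next
    case False
    then have "\<Psi> 0 = ((t - \<delta>) powr (2*H) + t powr (2*H) - \<delta> powr (2*H)) / 2"
      unfolding \<Psi>_def \<Phi>_def fbm_cov_def using d by simp
    moreover have "t powr (2*H) - (t - \<delta>) powr (2*H) \<le> 2*H * T powr (2*H - 1) * \<delta>"
      using False t H d powr_diff_le[of "t - \<delta>" t T "2*H"] by auto
    moreover have "0 \<le> \<delta> powr (2*H)" by simp
    moreover have "0 \<le> 2*H * T powr (2*H - 1) * \<delta>" using H d by simp
    ultimately show ?thesis by (rule lin_helper)
  qed
  finally show ?thesis using step1 unfolding E_def by simp
qed



lemma normal_density_exp_sq:
  fixes v b x :: real
  assumes v: "0 < v" and b: "0 \<le> b" and bv: "2 * b * v < 1"
  defines "vv \<equiv> v / (1 - 2 * b * v)"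
  shows "normal_density 0 (sqrt v) x * exp (b * x\<^sup>2) = sqrt (1 / (1 - 2 * b * v)) * normal_density 0 (sqrt vv) x"
proof -
  have vv: "0 < vv" using v bv by (simp add: vv_def)
  have ex: "- (x\<^sup>2 / (2 * v)) + b * x\<^sup>2 = - (x\<^sup>2 / (2 * vv))"
    using v bv by (simp add: vv_def field_simps)
  have ex2: "exp (- (x\<^sup>2 / (2 * v))) * exp (b * x\<^sup>2) = exp (- (x\<^sup>2 / (2 * vv)))"
    by (subst exp_add[symmetric]) (simp only: ex)
  have sq: "1 / sqrt (2 * pi * v) = sqrt (1 / (1 - 2 * b * v)) * (1 / sqrt (2 * pi * vv))"
  proof -
    have e: "2 * pi * vv = (2 * pi * v) * (1 / (1 - 2 * b * v))" by (simp add: vv_def)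
    have "sqrt (2 * pi * vv) = sqrt (2 * pi * v) * sqrt (1 / (1 - 2 * b * v))"
      by (subst e, rule real_sqrt_mult)
    moreover have "0 < sqrt (1 / (1 - 2 * b * v))" using bv by simp
    moreover have "0 < sqrt (2 * pi * v)" using v by simp
    ultimately show ?thesis by (simp add: field_simps)
  qed
  have "normal_density 0 (sqrt v) x * exp (b * x\<^sup>2) = 1 / sqrt (2 * pi * v) * exp (- x\<^sup>2 / (2 * vv) )"
    unfolding normal_density_def using v by (simp add: ex2[symmetric] mult.assoc)
  also have "\<dots> = sqrt (1 / (1 - 2 * b * v)) * normal_density 0 (sqrt vv) x"
    unfolding normal_density_def sq using vv by simp
  finally show ?thesis .
qed

lemma gauss_exp_moment:
  assumes M: "prob_space M" and Y: "centered_gaussian_rv M v Y"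
    and v: "0 \<le> v" and b: "0 \<le> b" and bv: "b * v \<le> 1/4"
  shows "(\<integral>\<^sup>+\<omega>. ennreal (exp (b * (Y \<omega>)\<^sup>2)) \<partial>M) \<le> 2"
proof (cases "v = 0")
  case True
  then have ae: "AE \<omega> in M. Y \<omega> = 0" using Y unfolding centered_gaussian_rv_def by simp
  have "(\<integral>\<^sup>+\<omega>. ennreal (exp (b * (Y \<omega>)\<^sup>2)) \<partial>M) = (\<integral>\<^sup>+\<omega>. 1 \<partial>M)"
    by (rule nn_integral_cong_AE) (use ae in auto)
  also have "\<dots> = 1" using prob_space.emeasure_space_1[OF M] by simp
  finally show ?thesis by simp
next
  case False
  then have v0: "0 < v" using v by simp
  have bv2: "2 * b * v < 1" using bv by simp
  define vv where "vv = v / (1 - 2 * b * v)"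
  have dist: "distributed M lborel Y (\<lambda>x. ennreal (normal_density 0 (sqrt v) x))"
    using Y False unfolding centered_gaussian_rv_def by simp
  have "(\<integral>\<^sup>+\<omega>. ennreal (exp (b * (Y \<omega>)\<^sup>2)) \<partial>M)
      = (\<integral>\<^sup>+x. ennreal (normal_density 0 (sqrt v) x) * ennreal (exp (b * x\<^sup>2)) \<partial>lborel)"
    by (rule distributed_nn_integral[OF dist, symmetric]) simp
  also have "\<dots> = (\<integral>\<^sup>+x. ennreal (sqrt (1 / (1 - 2 * b * v))) * ennreal (normal_density 0 (sqrt vv) x) \<partial>lborel)"
  proof (intro nn_integral_cong)
    fix x
    have "ennreal (normal_density 0 (sqrt v) x) * ennreal (exp (b * x\<^sup>2))
       = ennreal (normal_density 0 (sqrt v) x * exp (b * x\<^sup>2))" by (rule ennreal_mult[symmetric]) auto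
    also have "\<dots> = ennreal (sqrt (1 / (1 - 2 * b * v)) * normal_density 0 (sqrt vv) x)"
      by (simp add: normal_density_exp_sq[OF v0 b bv2] vv_def)
    also have "\<dots> = ennreal (sqrt (1 / (1 - 2 * b * v))) * ennreal (normal_density 0 (sqrt vv) x)"
      by (rule ennreal_mult) (use bv2 in auto)
    finally show "ennreal (normal_density 0 (sqrt v) x) * ennreal (exp (b * x\<^sup>2))
       = ennreal (sqrt (1 / (1 - 2 * b * v))) * ennreal (normal_density 0 (sqrt vv) x)" .
  qed
  also have "\<dots> = ennreal (sqrt (1 / (1 - 2 * b * v))) * (\<integral>\<^sup>+x. ennreal (normal_density 0 (sqrt vv) x) \<partial>lborel)"
    by (rule nn_integral_cmult) simp
  also have "(\<integral>\<^sup>+x. ennreal (normal_density 0 (sqrt vv) x) \<partial>lborel) = 1"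
  proof -
    have "0 < sqrt vv" using v0 bv2 by (simp add: vv_def)
    then show ?thesis by (subst nn_integral_eq_integral) (auto simp: integrable_normal_density integral_normal_density)
  qed
  also have "sqrt (1 / (1 - 2 * b * v)) \<le> 2"
  proof -
    have "1 / (1 - 2 * b * v) \<le> 2" using bv bv2 by (simp add: field_simps)
    then have "sqrt (1 / (1 - 2 * b * v)) \<le> sqrt 4" by (intro real_sqrt_le_mono) simp
    then show ?thesis by simp
  qed
  then have "ennreal (sqrt (1 / (1 - 2 * b * v))) \<le> ennreal 2" by (rule ennreal_leI)
  then have "ennreal (sqrt (1 / (1 - 2 * b * v))) * 1 \<le> 2" by simp
  finally show ?thesis .
qed



definition cs2 :: "(nat \<Rightarrow> real) \<Rightarrow> nat \<Rightarrow> real" where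
  "cs2 g a = (if even a then g (a div 2) else - g (a div 2))"
definition ts2 :: "(nat \<Rightarrow> real) \<Rightarrow> nat \<Rightarrow> real" where
  "ts2 s a = (if even a then s (Suc (a div 2)) else s (a div 2))"

lemma pair_sum:
  "(\<Sum>a<2*n. cs2 g a * f (ts2 s a)) = (\<Sum>i<n. g i * (f (s (Suc i)) - f (s i)))"
proof -
  have "(\<Sum>a<2*n. cs2 g a * f (ts2 s a)) =
     (\<Sum>a<2*n. if even a then g (a div 2) * f (s (Suc (a div 2))) else - g (a div 2) * f (s (a div 2)))"
    unfolding cs2_def ts2_def by (intro sum.cong) auto
  also have "\<dots> = (\<Sum>i<n. g i * f (s (Suc i))) + (\<Sum>i<n. - g i * f (s i))"
    by (subst sum_split_even_odd) simp
  also have "\<dots> = (\<Sum>i<n. g i * (f (s (Suc i)) - f (s i)))"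
    by (simp add: sum.distrib[symmetric] algebra_simps sum_negf)
  finally show ?thesis .
qed

lemma pair_double_sum:
  "(\<Sum>a<2*n. \<Sum>b<2*n. cs2 g a * cs2 g b * fbm_cov H (ts2 s a) (ts2 s b))
   = (\<Sum>i<n. \<Sum>j<n. g i * g j * Cm H s i j)"
proof -
  define F where "F x = (\<Sum>j<n. g j * (fbm_cov H x (s (Suc j)) - fbm_cov H x (s j)))" for x
  have "(\<Sum>a<2*n. \<Sum>b<2*n. cs2 g a * cs2 g b * fbm_cov H (ts2 s a) (ts2 s b))
     = (\<Sum>a<2*n. cs2 g a * (\<Sum>b<2*n. cs2 g b * fbm_cov H (ts2 s a) (ts2 s b)))"
    by (simp add: sum_distrib_left mult.assoc)
  also have "\<dots> = (\<Sum>a<2*n. cs2 g a * F (ts2 s a))"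
    unfolding F_def by (subst pair_sum) simp
  also have "\<dots> = (\<Sum>i<n. g i * (F (s (Suc i)) - F (s i)))"
    by (rule pair_sum)
  also have "\<dots> = (\<Sum>i<n. \<Sum>j<n. g i * g j * Cm H s i j)"
    unfolding F_def Cm_def
    by (simp add: sum_subtractf[symmetric] sum_distrib_left algebra_simps)
  finally show ?thesis .
qed

lemma riemann_gaussian:
  fixes n :: nat and g :: "nat \<Rightarrow> real" and t :: real
  assumes fbm: "is_fbm M H W" and t: "0 \<le> t"
  defines "s \<equiv> \<lambda>i. t * real i / real n"
  shows "centered_gaussian_rv M (\<Sum>i<n. \<Sum>j<n. g i * g j * Cm H s i j)
           (\<lambda>\<omega>. \<Sum>j<n. g j * (W (s (Suc j)) \<omega> - W (s j) \<omega>))"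
proof -
  have ts: "\<forall>a<2*n. 0 \<le> ts2 s a" using t by (auto simp: ts2_def s_def)
  have "centered_gaussian_rv M (\<Sum>a<2*n. \<Sum>b<2*n. cs2 g a * cs2 g b * fbm_cov H (ts2 s a) (ts2 s b))
          (\<lambda>\<omega>. \<Sum>a<2*n. cs2 g a * W (ts2 s a) \<omega>)"
    using fbm ts unfolding is_fbm_def by blast
  moreover have "(\<lambda>\<omega>. \<Sum>a<2*n. cs2 g a * W (ts2 s a) \<omega>) = (\<lambda>\<omega>. \<Sum>j<n. g j * (W (s (Suc j)) \<omega> - W (s j) \<omega>))"
    by (rule ext) (rule pair_sum)
  ultimately show ?thesis by (simp only: pair_double_sum)
qed



lemma fbm_meas:
  assumes "is_fbm M H W" "0 \<le> t"
  shows "W t \<in> borel_measurable M"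
proof -
  have A: "\<forall>n (ts::nat \<Rightarrow> real) (cs::nat \<Rightarrow> real). (\<forall>i<n. 0 \<le> ts i) \<longrightarrow>
        centered_gaussian_rv M (\<Sum>i<n. \<Sum>j<n. cs i * cs j * fbm_cov H (ts i) (ts j))
          (\<lambda>\<omega>. \<Sum>i<n. cs i * W (ts i) \<omega>)"
    using assms(1) unfolding is_fbm_def by (rule conjunct2)
  have "centered_gaussian_rv M (fbm_cov H t t) (W t)"
    using mp[OF A[THEN spec[where x=1], THEN spec[where x="\<lambda>_. t"], THEN spec[where x="\<lambda>_. 1"]]] assms(2)
    by simp
  then show ?thesis unfolding centered_gaussian_rv_def by (rule conjunct1)
qed

lemma lim_nonconv: "\<not> convergent X \<Longrightarrow> lim X = (THE x::real. False)"
  unfolding lim_def convergent_def by simp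

lemma exp_moment_S:
  fixes t T H \<mu> \<eta> \<delta> b :: real
  assumes M: "prob_space M" and fbm: "is_fbm M H W" and H: "1/2 < H" "H < 1"
    and t: "0 \<le> t" "t \<le> T" and mu: "\<eta> \<le> \<mu>" "0 \<le> \<eta>" and d: "0 < \<delta>" and b: "0 \<le> b"
    and bV: "b * (exp (-2*\<eta>*\<delta>) * T powr (2*H) + 2*H * T powr (2*H - 1) * \<delta> + \<delta> powr (2*H)) \<le> 1/4"
  shows "(\<integral>\<^sup>+\<omega>. ennreal (exp (b * (stoch_int (\<lambda>s. exp (- \<mu> * (t - s))) W t \<omega>)\<^sup>2)) \<partial>M)
     \<le> 2 + ennreal (exp (b * (THE x::real. False)\<^sup>2))"
proof -
  define C0 where "C0 = (THE x::real. False)"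
  define R where "R n \<omega> = (\<Sum>j<n. exp (- \<mu> * (t - t * real j / real n)) *
       (W (t * real (Suc j) / real n) \<omega> - W (t * real j / real n) \<omega>))" for n \<omega>
  define u where "u n \<omega> = ennreal (exp (b * (R n \<omega>)\<^sup>2))" for n \<omega>
  have S: "stoch_int (\<lambda>s. exp (- \<mu> * (t - s))) W t \<omega> = lim (\<lambda>n. R n \<omega>)" for \<omega>
    unfolding stoch_int_def R_def ..
  have Rm: "R n \<in> borel_measurable M" for n
  proof -
    have Wm: "W (t * real j / real n) \<in> borel_measurable M" for j
      by (rule fbm_meas[OF fbm]) (use t in simp)
    show ?thesis unfolding R_def
      by (intro borel_measurable_sum borel_measurable_times borel_measurable_const borel_measurable_diff Wm)
  qed
  have um: "u n \<in> borel_measurable M" for n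
  proof -
    have "(\<lambda>x::real. ennreal (exp (b * x\<^sup>2))) \<in> borel_measurable borel" by measurable
    from measurable_compose[OF Rm this] show ?thesis unfolding u_def by simp
  qed
  have ub: "(\<integral>\<^sup>+\<omega>. u n \<omega> \<partial>M) \<le> 2" for n
  proof (cases "n = 0")
    case True
    then have "(\<integral>\<^sup>+\<omega>. u n \<omega> \<partial>M) = (\<integral>\<^sup>+\<omega>. 1 \<partial>M)" unfolding u_def R_def by simp
    also have "\<dots> = 1" using prob_space.emeasure_space_1[OF M] by simp
    finally show ?thesis by simp
  next
    case False
    define s where "s = (\<lambda>i. t * real i / real n)"
    define g where "g = (\<lambda>i. exp (- \<mu> * (t - s i)))"
    define v where "v = (\<Sum>i<n. \<Sum>j<n. g i * g j * Cm H s i j)"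
    have G: "centered_gaussian_rv M v (\<lambda>\<omega>. \<Sum>j<n. g j * (W (s (Suc j)) \<omega> - W (s j) \<omega>))"
      unfolding v_def s_def using riemann_gaussian[OF fbm t(1), where n=n and g=g] by (simp add: s_def)
    have Req: "(\<lambda>\<omega>. \<Sum>j<n. g j * (W (s (Suc j)) \<omega> - W (s j) \<omega>)) = R n"
      unfolding R_def g_def s_def by (rule ext) simp
    have s0: "s 0 = 0" by (simp add: s_def)
    have ms: "mono s" unfolding s_def mono_def using t by (auto intro!: divide_right_mono mult_left_mono)
    have v0: "0 \<le> v" unfolding v_def using Cm_nonneg[of H s] H s0 ms
      by (intro sum_nonneg mult_nonneg_nonneg) (auto simp: g_def)
    have vV: "v \<le> exp (-2*\<eta>*\<delta>) * T powr (2*H) + 2*H * T powr (2*H - 1) * \<delta> + \<delta> powr (2*H)"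
      unfolding v_def g_def s_def using var_bound[OF H t _ mu d, where n=n] False by simp
    have "b * v \<le> 1/4"
      using bV mult_left_mono[OF vV b] by simp
    from gauss_exp_moment[OF M G[unfolded Req] v0 b this] show ?thesis unfolding u_def .
  qed
  have pw: "ennreal (exp (b * (stoch_int (\<lambda>s. exp (- \<mu> * (t - s))) W t \<omega>)\<^sup>2))
      \<le> liminf (\<lambda>n. u n \<omega>) + ennreal (exp (b * C0\<^sup>2))" for \<omega>
  proof (cases "convergent (\<lambda>n. R n \<omega>)")
    case True
    then have "(\<lambda>n. R n \<omega>) \<longlonglongrightarrow> lim (\<lambda>n. R n \<omega>)" by (simp add: convergent_LIMSEQ_iff)
    then have "(\<lambda>n. u n \<omega>) \<longlonglongrightarrow> ennreal (exp (b * (lim (\<lambda>n. R n \<omega>))\<^sup>2))"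
      unfolding u_def by (intro tendsto_ennrealI tendsto_intros)
    then have "liminf (\<lambda>n. u n \<omega>) = ennreal (exp (b * (lim (\<lambda>n. R n \<omega>))\<^sup>2))"
      by (intro lim_imp_Liminf) auto
    then show ?thesis unfolding S by (simp add: add_increasing2)
  next
    case False
    then have "stoch_int (\<lambda>s. exp (- \<mu> * (t - s))) W t \<omega> = C0"
      unfolding S C0_def by (rule lim_nonconv)
    then show ?thesis by (simp add: add_increasing)
  qed
  have L: "(\<integral>\<^sup>+\<omega>. liminf (\<lambda>n. u n \<omega>) \<partial>M) \<le> 2"
  proof -
    have "(\<integral>\<^sup>+\<omega>. liminf (\<lambda>n. u n \<omega>) \<partial>M) \<le> liminf (\<lambda>n. integral\<^sup>N M (u n))"
      by (rule nn_integral_liminf[OF um])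
    also have "liminf (\<lambda>n. integral\<^sup>N M (u n)) \<le> limsup (\<lambda>n. integral\<^sup>N M (u n))"
      by (rule Liminf_le_Limsup) (rule trivial_limit_sequentially)
    also have "limsup (\<lambda>n. integral\<^sup>N M (u n)) \<le> 2"
      by (rule Limsup_bounded) (rule always_eventually, rule allI, rule ub)
    finally show ?thesis .
  qed
  have "(\<integral>\<^sup>+\<omega>. ennreal (exp (b * (stoch_int (\<lambda>s. exp (- \<mu> * (t - s))) W t \<omega>)\<^sup>2)) \<partial>M)
      \<le> (\<integral>\<^sup>+\<omega>. liminf (\<lambda>n. u n \<omega>) + ennreal (exp (b * C0\<^sup>2)) \<partial>M)"
    by (intro nn_integral_mono pw)
  also have "\<dots> = (\<integral>\<^sup>+\<omega>. liminf (\<lambda>n. u n \<omega>) \<partial>M) + (\<integral>\<^sup>+\<omega>. ennreal (exp (b * C0\<^sup>2)) \<partial>M)"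
    by (intro nn_integral_add borel_measurable_liminf um borel_measurable_const)
  also have "(\<integral>\<^sup>+\<omega>. ennreal (exp (b * C0\<^sup>2)) \<partial>M) = ennreal (exp (b * C0\<^sup>2))"
    using prob_space.emeasure_space_1[OF M] by simp
  finally have "(\<integral>\<^sup>+\<omega>. ennreal (exp (b * (stoch_int (\<lambda>s. exp (- \<mu> * (t - s))) W t \<omega>)\<^sup>2)) \<partial>M)
      \<le> (\<integral>\<^sup>+\<omega>. liminf (\<lambda>n. u n \<omega>) \<partial>M) + ennreal (exp (b * C0\<^sup>2))" .
  also have "\<dots> \<le> 2 + ennreal (exp (b * C0\<^sup>2))" by (rule add_right_mono[OF L])
  finally show ?thesis unfolding C0_def .
qed



lemma floor_approx:
  fixes x :: real
  shows "(\<lambda>m. of_int \<lfloor>real (Suc m) * x\<rfloor> / real (Suc m)) \<longlonglongrightarrow> x"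
proof (rule tendsto_sandwich)
  show "\<forall>\<^sub>F m in sequentially. x - inverse (real (Suc m)) \<le> of_int \<lfloor>real (Suc m) * x\<rfloor> / real (Suc m)"
  proof (intro always_eventually allI)
    fix m
    have "real (Suc m) * x - 1 \<le> of_int \<lfloor>real (Suc m) * x\<rfloor>" by linarith
    then have "(real (Suc m) * x - 1) / real (Suc m) \<le> of_int \<lfloor>real (Suc m) * x\<rfloor> / real (Suc m)"
      by (intro divide_right_mono) auto
    moreover have "(real (Suc m) * x - 1) / real (Suc m) = x - inverse (real (Suc m))"
      by (simp add: field_simps)
    ultimately show "x - inverse (real (Suc m)) \<le> of_int \<lfloor>real (Suc m) * x\<rfloor> / real (Suc m)"
      by simp
  qed
  show "\<forall>\<^sub>F m in sequentially. of_int \<lfloor>real (Suc m) * x\<rfloor> / real (Suc m) \<le> x"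
  proof (intro always_eventually allI)
    fix m
    have "of_int \<lfloor>real (Suc m) * x\<rfloor> \<le> real (Suc m) * x" by linarith
    then show "of_int \<lfloor>real (Suc m) * x\<rfloor> / real (Suc m) \<le> x"
      by (simp add: field_simps)
  qed
  show "(\<lambda>m. x - inverse (real (Suc m))) \<longlonglongrightarrow> x"
    using tendsto_diff[OF tendsto_const LIMSEQ_inverse_real_of_nat, of x] by simp
qed simp

lemma caratheodory_meas:
  fixes X :: "real \<Rightarrow> 'a \<Rightarrow> real"
  assumes cont: "\<forall>\<omega>\<in>space M. continuous_on {0..} (\<lambda>t. X t \<omega>)"
    and meas: "\<And>t. 0 \<le> t \<Longrightarrow> X t \<in> borel_measurable M"
  shows "(\<lambda>p. X (max 0 (fst p)) (snd p)) \<in> borel_measurable (lborel \<Otimes>\<^sub>M M)"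
proof (rule borel_measurable_LIMSEQ_metric)
  define F where "F m p = X (max 0 (of_int \<lfloor>real (Suc m) * max 0 (fst p)\<rfloor> / real (Suc m))) (snd p)"
    for m and p :: "real \<times> 'a"
  show "F m \<in> borel_measurable (lborel \<Otimes>\<^sub>M M)" for m
  proof -
    have g: "(\<lambda>p::real \<times> 'a. \<lfloor>real (Suc m) * max 0 (fst p)\<rfloor>) \<in> measurable (lborel \<Otimes>\<^sub>M M) (count_space UNIV)"
      by measurable
    have f: "(\<lambda>p. X (max 0 (of_int i / real (Suc m))) (snd p)) \<in> borel_measurable (lborel \<Otimes>\<^sub>M M)" for i :: int
      using meas[of "max 0 (of_int i / real (Suc m))"] by (intro measurable_compose[OF measurable_snd]) auto
    show ?thesis unfolding F_def
      by (rule measurable_compose_countable'[where I=UNIV, OF f g]) auto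
  qed
  show "(\<lambda>m. F m p) \<longlonglongrightarrow> X (max 0 (fst p)) (snd p)" if p: "p \<in> space (lborel \<Otimes>\<^sub>M M)" for p
  proof -
    have sp: "snd p \<in> space M" using p by (auto simp: space_pair_measure)
    have l: "(\<lambda>m. max 0 (of_int \<lfloor>real (Suc m) * max 0 (fst p)\<rfloor> / real (Suc m))) \<longlonglongrightarrow> max 0 (max 0 (fst p))"
      by (intro tendsto_max tendsto_const floor_approx)
    have "(\<lambda>m. X (max 0 (of_int \<lfloor>real (Suc m) * max 0 (fst p)\<rfloor> / real (Suc m))) (snd p))
         \<longlonglongrightarrow> X (max 0 (max 0 (fst p))) (snd p)"
      by (rule continuous_on_tendsto_compose[OF cont[rule_format, OF sp] l]) auto
    then show ?thesis unfolding F_def by simp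
  qed
qed



lemma Linf_bound:
  fixes a :: "nat \<Rightarrow> real"
  shows "(Linf_norm (\<lambda>x. \<Sum>k=1..N. a k * phi k x))\<^sup>2 \<le> 2 * (\<Sum>k=1..N. \<bar>a k\<bar>)\<^sup>2"
proof -
  define B where "B = sqrt 2 * (\<Sum>k=1..N. \<bar>a k\<bar>)"
  have pt: "\<bar>\<Sum>k=1..N. a k * phi k x\<bar> \<le> B" for x
  proof -
    have "\<bar>\<Sum>k=1..N. a k * phi k x\<bar> \<le> (\<Sum>k=1..N. \<bar>a k * phi k x\<bar>)" by (rule sum_abs)
    also have "\<dots> \<le> (\<Sum>k=1..N. \<bar>a k\<bar> * sqrt 2)"
    proof (intro sum_mono)
      fix k
      have "\<bar>phi k x\<bar> \<le> sqrt 2" unfolding phi_def by (simp add: abs_mult)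
      then show "\<bar>a k * phi k x\<bar> \<le> \<bar>a k\<bar> * sqrt 2" by (simp add: abs_mult mult_left_mono)
    qed
    finally show ?thesis by (simp add: B_def sum_distrib_left mult.commute)
  qed
  have ne: "{0<..<1::real} \<noteq> {}" by (auto intro: exI[of _ "1/2"])
  have bdd: "bdd_above ((\<lambda>x. \<bar>\<Sum>k=1..N. a k * phi k x\<bar>) ` {0<..<1})"
    by (rule bdd_aboveI2[where M=B]) (rule pt)
  have up: "Linf_norm (\<lambda>x. \<Sum>k=1..N. a k * phi k x) \<le> B"
    unfolding Linf_norm_def by (rule cSUP_least[OF ne]) (use pt in auto)
  have lo: "0 \<le> Linf_norm (\<lambda>x. \<Sum>k=1..N. a k * phi k x)"
    unfolding Linf_norm_def by (rule cSUP_upper2[OF bdd, of "1/2"]) auto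
  have "(Linf_norm (\<lambda>x. \<Sum>k=1..N. a k * phi k x))\<^sup>2 \<le> B\<^sup>2"
    using up lo by (intro power_mono) auto
  also have "B\<^sup>2 = 2 * (\<Sum>k=1..N. \<bar>a k\<bar>)\<^sup>2" by (simp add: B_def power_mult_distrib)
  finally show ?thesis .
qed

lemma exp_sum_sq_bound:
  fixes y :: "nat \<Rightarrow> real"
  assumes K: "finite K" and b: "0 \<le> b"
  shows "exp (b * (\<Sum>k\<in>K. \<bar>y k\<bar>)\<^sup>2) \<le> 1 + (\<Sum>k\<in>K. exp (b * (real (card K))\<^sup>2 * (y k)\<^sup>2))"
proof (cases "K = {}")
  case True then show ?thesis by simp
next
  case False
  define m where "m = Max ((\<lambda>k. \<bar>y k\<bar>) ` K)"
  have "m \<in> (\<lambda>k. \<bar>y k\<bar>) ` K" unfolding m_def using K False by (intro Max_in) auto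
  then obtain k0 where k0: "k0 \<in> K" "m = \<bar>y k0\<bar>" by auto
  have "(\<Sum>k\<in>K. \<bar>y k\<bar>) \<le> (\<Sum>k\<in>K. m)"
    by (intro sum_mono) (auto simp: m_def K)
  also have "\<dots> = real (card K) * m" by simp
  finally have s: "(\<Sum>k\<in>K. \<bar>y k\<bar>) \<le> real (card K) * m" .
  have "(\<Sum>k\<in>K. \<bar>y k\<bar>)\<^sup>2 \<le> (real (card K) * m)\<^sup>2"
    using s by (intro power_mono) (auto intro: sum_nonneg)
  also have "\<dots> = (real (card K))\<^sup>2 * (y k0)\<^sup>2" by (simp add: k0 power_mult_distrib)
  finally have "b * (\<Sum>k\<in>K. \<bar>y k\<bar>)\<^sup>2 \<le> b * (real (card K))\<^sup>2 * (y k0)\<^sup>2"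
    using b by (simp add: mult_left_mono mult.assoc)
  then have "exp (b * (\<Sum>k\<in>K. \<bar>y k\<bar>)\<^sup>2) \<le> exp (b * (real (card K))\<^sup>2 * (y k0)\<^sup>2)" by simp
  also have "\<dots> \<le> (\<Sum>k\<in>K. exp (b * (real (card K))\<^sup>2 * (y k)\<^sup>2))"
    by (rule member_le_sum[OF k0(1)]) (auto simp: K)
  finally show ?thesis by simp
qed

lemma jensen_step:
  fixes f h :: "real \<Rightarrow> real" and T c :: real
  assumes T: "0 < T" and c: "0 < c" and hm: "h \<in> borel_measurable lborel"
    and fh: "\<And>t. t \<in> {0..T} \<Longrightarrow> f t \<le> h t" and f0: "\<And>t. t \<in> {0..T} \<Longrightarrow> 0 \<le> f t"
  shows "ennreal (exp (c * (LINT t:{0..T}|lborel. f t)))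
     \<le> ennreal (1/T) * (\<integral>\<^sup>+t. ennreal (exp (c * T * h t)) * indicator {0..T} t \<partial>lborel)"
proof -
  define Q where "Q = (\<integral>\<^sup>+t. ennreal (exp (c * T * h t)) * indicator {0..T} t \<partial>lborel)"
  have ind: "(\<integral>\<^sup>+t. indicator {0..T} t \<partial>lborel) = ennreal T"
    using T by simp
  have Q1: "ennreal T \<le> Q"
  proof -
    have "(\<integral>\<^sup>+t. indicator {0..T} t \<partial>lborel) \<le> Q"
      unfolding Q_def
    proof (intro nn_integral_mono)
      fix t
      show "indicator {0..T} t \<le> ennreal (exp (c * T * h t)) * indicator {0..T} t"
      proof (cases "t \<in> {0..T}")
        case True
        then have "0 \<le> h t" using fh f0 by (meson order_trans)
        then have "1 \<le> exp (c * T * h t)" using c T by simp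
        then show ?thesis using True by simp
      qed simp
    qed
    then show ?thesis using ind by simp
  qed
  show ?thesis
  proof (cases "set_integrable lborel {0..T} f")
    case False
    then have "(LINT t:{0..T}|lborel. f t) = 0"
      unfolding set_integrable_def set_lebesgue_integral_def by (rule not_integrable_integral_eq)
    then have "ennreal (exp (c * (LINT t:{0..T}|lborel. f t))) = ennreal (1/T) * ennreal T"
      using T by (simp add: ennreal_mult[symmetric])
    also have "\<dots> \<le> ennreal (1/T) * Q" by (intro mult_left_mono Q1) simp
    finally show ?thesis unfolding Q_def .
  next
    case True
    show ?thesis
    proof (cases "Q = \<infinity>")
      case True
      then have "ennreal (1/T) * Q = \<infinity>" using T by (simp add: ennreal_mult_eq_top_iff)
      then show ?thesis unfolding Q_def by simp
    next
      case False
      define q where "q t = exp (c * T * h t) * indicator {0..T} t" for t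
      define m where "m = c * (LINT t:{0..T}|lborel. f t)"
      have qm: "q \<in> borel_measurable lborel" unfolding q_def using hm by measurable
      have Qq: "Q = (\<integral>\<^sup>+t. ennreal (q t) \<partial>lborel)"
        unfolding Q_def q_def by (intro nn_integral_cong) (auto simp: indicator_def)
      have qi: "integrable lborel q"
        using False qm unfolding Qq
        by (intro integrableI_nonneg) (auto simp: q_def top.not_eq_extremum)
      have fi: "integrable lborel (\<lambda>t. indicator {0..T} t * f t)"
        using True unfolding set_integrable_def by simp
      have ii: "integrable lborel (\<lambda>t. indicator {0..T} t :: real)"
        using T by (simp add: integrable_indicator_iff)
      define r where "r t = exp m * (indicator {0..T} t * (1 - m) + c * T * (indicator {0..T} t * f t))" for t
      have ri: "integrable lborel r" unfolding r_def using ii fi by (intro integrable_mult_right integrable_add) auto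
      have rq: "r t \<le> q t" for t
      proof (cases "t \<in> {0..T}")
        case True
        have "exp m * (1 + (c * T * f t - m)) \<le> exp m * exp (c * T * f t - m)"
          by (intro mult_left_mono exp_ge_add_one_self) auto
        also have "\<dots> = exp (c * T * f t)" by (simp add: exp_diff)
        also have "\<dots> \<le> exp (c * T * h t)" using fh[OF True] c T by (simp add: mult_left_mono)
        finally show ?thesis using True by (simp add: r_def q_def algebra_simps)
      next
        case False then show ?thesis by (simp add: r_def q_def)
      qed
      have "integral\<^sup>L lborel r = exp m * (T * (1 - m) + c * T * (LINT t:{0..T}|lborel. f t))"
        unfolding r_def using ii fi T
        by (simp add: set_lebesgue_integral_def)
      also have "\<dots> = T * exp m" by (simp add: m_def algebra_simps)
      finally have "T * exp m \<le> integral\<^sup>L lborel q"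
        using integral_mono[OF ri qi rq] by simp
      moreover have "Q = ennreal (integral\<^sup>L lborel q)"
        unfolding Qq by (rule nn_integral_eq_integral[OF qi]) (simp add: q_def)
      ultimately have "ennreal (T * exp m) \<le> Q" by (simp add: ennreal_leI)
      then have "ennreal (1/T) * ennreal (T * exp m) \<le> ennreal (1/T) * Q" by (intro mult_left_mono) auto
      moreover have "ennreal (1/T) * ennreal (T * exp m) = ennreal (exp m)"
        using T by (simp add: ennreal_mult[symmetric])
      ultimately show ?thesis unfolding Q_def m_def by simp
    qed
  qed
qed



theorem mainTheorem3:
  fixes M :: "'a measure" and w :: "nat \<Rightarrow> real \<Rightarrow> 'a \<Rightarrow> real"
    and T H c :: real and N :: nat
  assumes "prob_space M"
    and "0 < T" and "1/2 < H" and "H < 1"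
    and "\<And>k. is_fbm M H (w k)"
    and "prob_space.indep_vars M (\<lambda>k. Pi\<^sub>M UNIV (\<lambda>_. (borel :: real measure))) (\<lambda>k \<omega>. \<lambda>t. w k t \<omega>) UNIV"
    and "0 < c"
  shows "\<exists>\<eta>\<ge>0. (\<integral>\<^sup>+\<omega>. ennreal (exp (c * (LINT t:{0..T}|lborel.
             (Linf_norm (OU w N \<eta> t \<omega>))\<^sup>2 + 1))) \<partial>M) < \<infinity>"
proof -
  note M = assms(1) and T = assms(2) and H = assms(3,4) and fbm = assms(5) and c = assms(7)
  interpret P: prob_space M by (rule M)
  define b where "b = 2 * c * T * (real N)\<^sup>2"
  define K1 where "K1 = 2*H * T powr (2*H - 1) + 1"
  define \<delta> where "\<delta> = min 1 (1 / (8 * (b + 1) * K1))"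
  define \<eta> where "\<eta> = ln (8 * (b + 1) * T powr (2*H) + 1) / (2 * \<delta>)"
  have b0: "0 \<le> b" unfolding b_def using c T by simp
  have K1: "1 \<le> K1" unfolding K1_def using H T by simp
  have d0: "0 < \<delta>" unfolding \<delta>_def using b0 K1 by simp
  have d1: "\<delta> \<le> 1" unfolding \<delta>_def by simp
  have eta0: "0 \<le> \<eta>" unfolding \<eta>_def using d0 b0 T by (intro divide_nonneg_pos) auto
  have bV: "b * (exp (-2*\<eta>*\<delta>) * T powr (2*H) + 2*H * T powr (2*H - 1) * \<delta> + \<delta> powr (2*H)) \<le> 1/4"
  proof -
    have dp: "\<delta> powr (2*H) \<le> \<delta>"
    proof -
      have "\<delta> powr (2*H) \<le> \<delta> powr 1" using d0 d1 H by (intro powr_mono') auto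
      then show ?thesis using d0 by simp
    qed
    have "2*H * T powr (2*H - 1) * \<delta> + \<delta> powr (2*H) \<le> K1 * \<delta>"
      using dp by (simp add: K1_def algebra_simps)
    also have "\<dots> \<le> K1 * (1 / (8 * (b + 1) * K1))"
      using K1 unfolding \<delta>_def by (intro mult_left_mono) auto
    also have "\<dots> = 1 / (8 * (b + 1))" using K1 by simp
    finally have A: "2*H * T powr (2*H - 1) * \<delta> + \<delta> powr (2*H) \<le> 1 / (8 * (b + 1))" .
    have e: "exp (-2*\<eta>*\<delta>) = 1 / (8 * (b + 1) * T powr (2*H) + 1)"
    proof -
      have "-2*\<eta>*\<delta> = - ln (8 * (b + 1) * T powr (2*H) + 1)" unfolding \<eta>_def using d0 by simp
      moreover have "0 < 8 * (b + 1) * T powr (2*H) + 1" using b0 T by (simp add: add_pos_nonneg)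
      ultimately show ?thesis by (simp add: exp_minus inverse_eq_divide)
    qed
    have B: "exp (-2*\<eta>*\<delta>) * T powr (2*H) \<le> 1 / (8 * (b + 1))"
    proof -
      define X where "X = 8 * (b + 1) * T powr (2*H)"
      have X0: "0 \<le> X" unfolding X_def using b0 by simp
      have "exp (-2*\<eta>*\<delta>) * T powr (2*H) = (X / (X + 1)) * (1 / (8 * (b + 1)))"
      proof -
        have e': "exp (-2*\<eta>*\<delta>) = 1 / (X + 1)" unfolding e X_def ..
        have Tp: "T powr (2*H) = X / (8 * (b + 1))" unfolding X_def using b0 by simp
        show ?thesis unfolding e' Tp by simp
      qed
      also have "\<dots> \<le> 1 * (1 / (8 * (b + 1)))"
        using X0 b0 by (intro mult_right_mono) auto
      finally show ?thesis by simp
    qed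
    have "b * (exp (-2*\<eta>*\<delta>) * T powr (2*H) + 2*H * T powr (2*H - 1) * \<delta> + \<delta> powr (2*H))
        \<le> b * (2 / (8 * (b + 1)))"
      using A B b0 by (intro mult_left_mono) auto
    also have "\<dots> \<le> 1/4" using b0 by (simp add: field_simps)
    finally show ?thesis .
  qed

  have fbmc: "\<forall>\<omega>\<in>space M. continuous_on {0..} (\<lambda>t. w k t \<omega>)" for k
    using fbm[of k] unfolding is_fbm_def by blast
  define Wc where "Wc k p = w k (max 0 (fst p)) (snd p)" for k and p :: "real \<times> 'a"
  define Rk where "Rk k n p = (\<Sum>j<n. exp (- (lam k + \<eta>) * (fst p - fst p * real j / real n)) *
     (Wc k (fst p * real (Suc j) / real n, snd p) - Wc k (fst p * real j / real n, snd p)))"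
    for k n and p :: "real \<times> 'a"
  define Sc where "Sc k p = lim (\<lambda>n. Rk k n p)" for k p
  define hh where "hh p = 1 + 2 * (\<Sum>k=1..N. \<bar>Sc k p\<bar>)\<^sup>2" for p
  define G where "G p = ennreal (exp (c * T * hh p)) * indicator {0..T} (fst p)" for p :: "real \<times> 'a"
  define C0 where "C0 = (THE x::real. False)"
  have Wcm: "Wc k \<in> borel_measurable (lborel \<Otimes>\<^sub>M M)" for k
    unfolding Wc_def by (rule caratheodory_meas[OF fbmc fbm_meas[OF fbm]])
  have Wcm2: "(\<lambda>p. Wc k (fst p * a, snd p)) \<in> borel_measurable (lborel \<Otimes>\<^sub>M M)" for k a
  proof -
    have "(\<lambda>p::real \<times> 'a. (fst p * a, snd p)) \<in> measurable (lborel \<Otimes>\<^sub>M M) (lborel \<Otimes>\<^sub>M M)"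
      by measurable
    from measurable_compose[OF this Wcm] show ?thesis by simp
  qed
  have Rkm: "Rk k n \<in> borel_measurable (lborel \<Otimes>\<^sub>M M)" for k n
  proof -
    have e: "(\<lambda>p::real \<times> 'a. exp (- (lam k + \<eta>) * (fst p - fst p * real j / real n))) \<in> borel_measurable (lborel \<Otimes>\<^sub>M M)" for j
      by measurable
    have w1: "(\<lambda>p. Wc k (fst p * real (Suc j) / real n, snd p)) \<in> borel_measurable (lborel \<Otimes>\<^sub>M M)" for j
      using Wcm2[of k "real (Suc j) / real n"] by (simp add: times_divide_eq_right)
    have w2: "(\<lambda>p. Wc k (fst p * real j / real n, snd p)) \<in> borel_measurable (lborel \<Otimes>\<^sub>M M)" for j
      using Wcm2[of k "real j / real n"] by (simp add: times_divide_eq_right)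
    show ?thesis unfolding Rk_def
      by (intro borel_measurable_sum borel_measurable_times borel_measurable_diff e w1 w2)
  qed
  have Scm: "Sc k \<in> borel_measurable (lborel \<Otimes>\<^sub>M M)" for k
    unfolding Sc_def by (rule borel_measurable_lim_metric[OF Rkm])
  have hhm: "hh \<in> borel_measurable (lborel \<Otimes>\<^sub>M M)"
    unfolding hh_def by (intro borel_measurable_add borel_measurable_const borel_measurable_times
        borel_measurable_power borel_measurable_sum borel_measurable_abs Scm)
  have Gm: "G \<in> borel_measurable (lborel \<Otimes>\<^sub>M M)"
  proof -
    have "(\<lambda>p. exp (c * T * hh p)) \<in> borel_measurable (lborel \<Otimes>\<^sub>M M)"
      using hhm by measurable
    moreover have "(\<lambda>p::real \<times> 'a. indicator {0..T} (fst p) :: ennreal) \<in> borel_measurable (lborel \<Otimes>\<^sub>M M)"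
      by measurable
    ultimately show ?thesis unfolding G_def by measurable
  qed
  have Sc_eq: "Sc k (t, \<omega>) = stoch_int (\<lambda>s. exp (- (lam k + \<eta>) * (t - s))) (w k) t \<omega>" if t: "0 \<le> t" for k t \<omega>
  proof -
    have m: "max 0 (t * real j / real n) = t * real j / real n" for j n using t by simp
    have m2: "max 0 (t * (1 + real j) / real n) = t * (1 + real j) / real n" for j n using t by simp
    show ?thesis unfolding Sc_def Rk_def Wc_def stoch_int_def by (simp add: m m2)
  qed
  have OU_eq: "OU w N \<eta> t \<omega> = (\<lambda>x. \<Sum>k=1..N. Sc k (t, \<omega>) * phi k x)" if t: "0 \<le> t" for t \<omega>
    unfolding OU_def using Sc_eq[OF t] by simp
  have pw: "ennreal (exp (c * (LINT t:{0..T}|lborel. (Linf_norm (OU w N \<eta> t \<omega>))\<^sup>2 + 1)))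
      \<le> (\<integral>\<^sup>+t. ennreal (1/T) * G (t, \<omega>) \<partial>lborel)" if \<omega>: "\<omega> \<in> space M" for \<omega>
  proof -
    have hm: "(\<lambda>t. hh (t, \<omega>)) \<in> borel_measurable lborel"
      using measurable_compose[OF measurable_Pair2'[OF \<omega>] hhm] by simp
    have fh: "(Linf_norm (OU w N \<eta> t \<omega>))\<^sup>2 + 1 \<le> hh (t, \<omega>)" if "t \<in> {0..T}" for t
    proof -
      have "(Linf_norm (OU w N \<eta> t \<omega>))\<^sup>2 \<le> 2 * (\<Sum>k=1..N. \<bar>Sc k (t, \<omega>)\<bar>)\<^sup>2"
        unfolding OU_eq[of t \<omega>, OF _] using that Linf_bound[of "\<lambda>k. Sc k (t, \<omega>)" N] OU_eq[of t \<omega>] by simp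
      then show ?thesis unfolding hh_def by simp
    qed
    have f0: "0 \<le> (Linf_norm (OU w N \<eta> t \<omega>))\<^sup>2 + 1" for t by simp
    have "ennreal (exp (c * (LINT t:{0..T}|lborel. (Linf_norm (OU w N \<eta> t \<omega>))\<^sup>2 + 1)))
      \<le> ennreal (1/T) * (\<integral>\<^sup>+t. ennreal (exp (c * T * hh (t, \<omega>))) * indicator {0..T} t \<partial>lborel)"
      by (rule jensen_step[OF T c hm fh f0])
    also have "\<dots> = ennreal (1/T) * (\<integral>\<^sup>+t. G (t, \<omega>) \<partial>lborel)"
      unfolding G_def by simp
    also have "\<dots> = (\<integral>\<^sup>+t. ennreal (1/T) * G (t, \<omega>) \<partial>lborel)"
      using measurable_compose[OF measurable_Pair2'[OF \<omega>] Gm]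
      by (intro nn_integral_cmult[symmetric]) simp
    finally show ?thesis .
  qed
  define Kc where "Kc = ennreal (exp (c * T)) * (1 + of_nat N * (2 + ennreal (exp (b * C0\<^sup>2))))"
  have inner: "(\<integral>\<^sup>+\<omega>. G (t, \<omega>) \<partial>M) \<le> Kc * indicator {0..T} t" for t
  proof (cases "t \<in> {0..T}")
    case False
    then show ?thesis unfolding G_def by simp
  next
    case True
    then have t: "0 \<le> t" "t \<le> T" by auto
    define e where "e k \<omega> = ennreal (exp (b * (Sc k (t, \<omega>))\<^sup>2))" for k \<omega>
    have em: "e k \<in> borel_measurable M" for k
    proof -
      have "(\<lambda>\<omega>. Sc k (t, \<omega>)) \<in> borel_measurable M"
        using measurable_compose[OF measurable_Pair1'[of t lborel M] Scm[of k]] by simp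
      then show ?thesis unfolding e_def by measurable
    qed
    have eb: "(\<integral>\<^sup>+\<omega>. e k \<omega> \<partial>M) \<le> 2 + ennreal (exp (b * C0\<^sup>2))" if k: "k \<in> {1..N}" for k
    proof -
      have "(\<integral>\<^sup>+\<omega>. e k \<omega> \<partial>M)
         = (\<integral>\<^sup>+\<omega>. ennreal (exp (b * (stoch_int (\<lambda>s. exp (- (lam k + \<eta>) * (t - s))) (w k) t \<omega>)\<^sup>2)) \<partial>M)"
        unfolding e_def using Sc_eq[OF t(1)] by simp
      also have "\<dots> \<le> 2 + ennreal (exp (b * C0\<^sup>2))"
        unfolding C0_def
        by (rule exp_moment_S[OF M fbm[of k] H t _ eta0 d0 b0 bV]) (simp add: lam_def)
      finally show ?thesis .
    qed
    have ptb: "G (t, \<omega>) \<le> ennreal (exp (c * T)) * (1 + (\<Sum>k\<in>{1..N}. e k \<omega>))" for \<omega>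
    proof -
      have es: "exp (c * T * 2 * (\<Sum>k\<in>{1..N}. \<bar>Sc k (t, \<omega>)\<bar>)\<^sup>2)
          \<le> 1 + (\<Sum>k\<in>{1..N}. exp (c * T * 2 * (real (card {1..N}))\<^sup>2 * (Sc k (t, \<omega>))\<^sup>2))"
        using c T by (intro exp_sum_sq_bound) auto
      have "exp (c * T * hh (t, \<omega>)) = exp (c * T) * exp (c * T * 2 * (\<Sum>k\<in>{1..N}. \<bar>Sc k (t, \<omega>)\<bar>)\<^sup>2)"
        unfolding hh_def by (simp add: exp_add[symmetric] algebra_simps)
      also have "\<dots> \<le> exp (c * T) * (1 + (\<Sum>k\<in>{1..N}. exp (b * (Sc k (t, \<omega>))\<^sup>2)))"
        using es by (simp add: b_def mult.assoc mult.left_commute)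
      finally have r: "exp (c * T * hh (t, \<omega>)) \<le> exp (c * T) * (1 + (\<Sum>k\<in>{1..N}. exp (b * (Sc k (t, \<omega>))\<^sup>2)))" .
      have "G (t, \<omega>) = ennreal (exp (c * T * hh (t, \<omega>)))" unfolding G_def using True by simp
      also have "\<dots> \<le> ennreal (exp (c * T) * (1 + (\<Sum>k\<in>{1..N}. exp (b * (Sc k (t, \<omega>))\<^sup>2))))"
        by (rule ennreal_leI[OF r])
      also have "\<dots> = ennreal (exp (c * T)) * (1 + (\<Sum>k\<in>{1..N}. e k \<omega>))"
        unfolding e_def by (simp add: ennreal_mult sum_nonneg)
      finally show ?thesis .
    qed
    have "(\<integral>\<^sup>+\<omega>. G (t, \<omega>) \<partial>M) \<le> (\<integral>\<^sup>+\<omega>. ennreal (exp (c * T)) * (1 + (\<Sum>k\<in>{1..N}. e k \<omega>)) \<partial>M)"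
      by (intro nn_integral_mono ptb)
    also have "\<dots> = ennreal (exp (c * T)) * ((\<integral>\<^sup>+\<omega>. 1 \<partial>M) + (\<Sum>k\<in>{1..N}. (\<integral>\<^sup>+\<omega>. e k \<omega> \<partial>M)))"
      using em by (simp add: nn_integral_cmult nn_integral_add nn_integral_sum borel_measurable_sum)
    also have "(\<integral>\<^sup>+\<omega>. 1 \<partial>M) = 1" using P.emeasure_space_1 by simp
    also have "(\<Sum>k\<in>{1..N}. (\<integral>\<^sup>+\<omega>. e k \<omega> \<partial>M)) \<le> (\<Sum>k\<in>{1..N}. 2 + ennreal (exp (b * C0\<^sup>2)))"
      by (intro sum_mono eb)
    also have "(\<Sum>k\<in>{1..N}. 2 + ennreal (exp (b * C0\<^sup>2))) = of_nat N * (2 + ennreal (exp (b * C0\<^sup>2)))"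
      by simp
    finally show ?thesis unfolding Kc_def using True by (simp add: mult_left_mono add_left_mono)
  qed
  have PS: "pair_sigma_finite lborel M"
    by (intro pair_sigma_finite.intro sigma_finite_lborel prob_space_imp_sigma_finite M)
  have Gm': "(\<lambda>p. ennreal (1/T) * G p) \<in> borel_measurable (lborel \<Otimes>\<^sub>M M)" using Gm by measurable
  have "(\<integral>\<^sup>+\<omega>. ennreal (exp (c * (LINT t:{0..T}|lborel. (Linf_norm (OU w N \<eta> t \<omega>))\<^sup>2 + 1))) \<partial>M)
      \<le> (\<integral>\<^sup>+\<omega>. (\<integral>\<^sup>+t. ennreal (1/T) * G (t, \<omega>) \<partial>lborel) \<partial>M)"
    by (intro nn_integral_mono pw)
  also have "\<dots> = (\<integral>\<^sup>+t. (\<integral>\<^sup>+\<omega>. ennreal (1/T) * G (t, \<omega>) \<partial>M) \<partial>lborel)"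
    using pair_sigma_finite.Fubini'[OF PS, of "\<lambda>t \<omega>. ennreal (1/T) * G (t, \<omega>)"] Gm' by simp
  also have "\<dots> = (\<integral>\<^sup>+t. ennreal (1/T) * (\<integral>\<^sup>+\<omega>. G (t, \<omega>) \<partial>M) \<partial>lborel)"
  proof (intro nn_integral_cong)
    fix t :: real
    have "(\<lambda>\<omega>. G (t, \<omega>)) \<in> borel_measurable M"
      using measurable_compose[OF measurable_Pair1'[of t lborel M] Gm] by simp
    then show "(\<integral>\<^sup>+\<omega>. ennreal (1/T) * G (t, \<omega>) \<partial>M) = ennreal (1/T) * (\<integral>\<^sup>+\<omega>. G (t, \<omega>) \<partial>M)"
      by (rule nn_integral_cmult)
  qed
  also have "\<dots> \<le> (\<integral>\<^sup>+t. ennreal (1/T) * Kc * indicator {0..T} t \<partial>lborel)"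
    by (intro nn_integral_mono) (simp add: mult.assoc mult_left_mono inner)
  also have "\<dots> = ennreal (1/T) * Kc * ennreal T"
    using T by (simp add: nn_integral_cmult_indicator)
  also have "\<dots> < \<infinity>"
    unfolding Kc_def by (simp add: ennreal_mult_less_top of_nat_less_top)
  finally show ?thesis using eta0 by blast
qed


end
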